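(* Let $\vec{\mathcal{G}}$ be a game graph with Min vertices $[n]$ satisfying assumptions (a)–(c), and assume moreover that every Random vertex has exactly two outgoing edges, each with probability $1/2$, and that every edge outgoing from a Random vertex has a Max vertex as its head. Let $F$ be the operator encoded by $\vec{\mathcal{G}}$, extended to $\mathbb{T}^n$ by the same formula (with $-\infty+a=-\infty$, $\tfrac12\cdot(-\infty)=-\infty$, and only terms with $p^e_w>0$, $p^{e'}_u>0$ kept in the sums). Then $\{x\in\mathbb{T}^n: x\le F(x)\}$ is a tropical Metzler spectrahedral cone, i.e. equals $\mathcal{S}(-\infty\,|\,Q^{(1)},\dots,Q^{(n)})$ for some symmetric tropical Metzler matrices $Q^{(1)},\dots,Q^{(n)}$ (with $Q^{(0)}$ the matrix all of whose entries are $(0,-\infty)$).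
   Context: Game graph: directed graph $(V,E)$, $V=V_{\mathrm{Min}}\uplus V_{\mathrm{Rand}}\uplus V_{\mathrm{Max}}$, $V_{\mathrm{Min}}=[n]$, $V_{\mathrm{Max}}=[m]$ nonempty, each vertex with an outgoing edge; $\mathrm{Out}(v)$ = outgoing edges. Edges with Min/Max tail carry reals $r_e$; edges with Random tail carry rationals $q_e>0$ summing to $1$ at each Random vertex. Assumptions: (a) every path between two Min vertices contains a Max vertex; (b) every path between two Max vertices contains a Min vertex; (c) every Random vertex has a path to a Min or Max vertex. With the Markov chain where Min/Max vertices are absorbing and Random $v$ moves to $w$ with probability $q_{(v,w)}$, $p^e_v$ is the probability of absorption at $v$ starting from the head of $e$. Encoded operator: $F_v(x)=\min_{e\in\mathrm{Out}(v)}\big(r_e+\sum_{w\in[m]}p^e_w\max_{e'\in\mathrm{Out}(w)}(r_{e'}+\sum_{u\in[n]}p^{e'}_u x_u)\big)$. $\mathbb{T}=\mathbb{R}\cup\{-\infty\}$. Signed tropical numbers $\mathbb{S}=(\{\pm1\}\times\mathbb{R})\cup\{(0,-\infty)\}$; $(1,a)$ positive, $(-1,a)$ negative, modulus $|(s,a)|=a$. A matrix over $\mathbb{S}$ is tropical Metzler if its off-diagonal entries are negative or $(0,-\infty)$. For symmetric tropical Metzler $Q^{(0)},\dots,Q^{(N)}\in\mathbb{S}^{m'\times m'}$, with $x_0:=0$ and $x\in\mathbb{T}^N$: $Q^{\pm}_{ii}(x)=\max\{|Q^{(k)}_{ii}|+x_k: Q^{(k)}_{ii}\text{ positive (resp.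 negative)}\}$ ($\max\emptyset=-\infty$), $Q_{ij}(x)=\max_k(|Q^{(k)}_{ij}|+x_k)$ for $i\ne j$; $\mathcal{S}(Q^{(0)}|Q^{(1)},\dots,Q^{(N)})=\{x\in\mathbb{T}^N: Q^+_{ii}(x)\ge Q^-_{ii}(x)\ \forall i,\ Q^+_{ii}(x)+Q^+_{jj}(x)\ge2Q_{ij}(x)\ \forall i\ne j\}$. *)

theory Defs
  imports "HOL-Analysis.Analysis" "HOL-Library.Extended_Real"
begin

text \<open>Vertices: Min vertices indexed by the finite type 'n (so [n] = 'n),
  Max vertices indexed by the finite type 'm (so [m] = 'm), Random vertices
  indexed by elements of a finite set R :: 'r set.\<close>

datatype ('n, 'm, 'r) vertex = MinV 'n | MaxV 'm | RandV 'r

fun isMin :: "('n, 'm, 'r) vertex \<Rightarrow> bool" where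
  "isMin (MinV _) = True" | "isMin _ = False"
fun isMax :: "('n, 'm, 'r) vertex \<Rightarrow> bool" where
  "isMax (MaxV _) = True" | "isMax _ = False"
fun isRand :: "('n, 'm, 'r) vertex \<Rightarrow> bool" where
  "isRand (RandV _) = True" | "isRand _ = False"

type_synonym ('n, 'm, 'r) edge = "('n, 'm, 'r) vertex \<times> ('n, 'm, 'r) vertex"

definition verts :: "'r set \<Rightarrow> ('n, 'm, 'r) vertex set" where
  "verts R = range MinV \<union> range MaxV \<union> RandV ` R"

definition Out :: "('n, 'm, 'r) edge set \<Rightarrow> ('n, 'm, 'r) vertex \<Rightarrow> ('n, 'm, 'r) edge set" where
  "Out E v = {e \<in> E. fst e = v}"

definition is_path :: "('n, 'm, 'r) edge set \<Rightarrow> ('n, 'm, 'r) vertex list \<Rightarrow> bool" where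
  "is_path E xs \<longleftrightarrow> length xs \<ge> 2 \<and> (\<forall>i. Suc i < length xs \<longrightarrow> (xs ! i, xs ! Suc i) \<in> E)"

definition game_graph ::
  "'r set \<Rightarrow> ('n::finite, 'm::finite, 'r) edge set \<Rightarrow> (('n, 'm, 'r) edge \<Rightarrow> real) \<Rightarrow> bool" where
  "game_graph R E q \<longleftrightarrow>
     finite R \<and> E \<subseteq> verts R \<times> verts R \<and>
     (\<forall>v \<in> verts R. Out E v \<noteq> {}) \<and>
     (\<forall>e \<in> E. isRand (fst e) \<longrightarrow> q e \<in> \<rat> \<and> q e > 0) \<and>
     (\<forall>k \<in> R. (\<Sum>e \<in> Out E (RandV k). q e) = 1) \<and>
     \<comment> \<open>(a)\<close>
     (\<forall>xs. is_path E xs \<and> isMin (hd xs) \<and> isMin (last xs) \<longrightarrow> (\<exists>v \<in> set xs. isMax v)) \<and>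
     \<comment> \<open>(b)\<close>
     (\<forall>xs. is_path E xs \<and> isMax (hd xs) \<and> isMax (last xs) \<longrightarrow> (\<exists>v \<in> set xs. isMin v)) \<and>
     \<comment> \<open>(c)\<close>
     (\<forall>k \<in> R. \<exists>xs. is_path E xs \<and> hd xs = RandV k \<and> \<not> isRand (last xs))"

fun absorb_k :: "('n, 'm, 'r) edge set \<Rightarrow> (('n, 'm, 'r) edge \<Rightarrow> real) \<Rightarrow> nat
     \<Rightarrow> ('n, 'm, 'r) vertex \<Rightarrow> ('n, 'm, 'r) vertex \<Rightarrow> real" where
  "absorb_k E q 0 v w = (if isRand v then 0 else if v = w then 1 else 0)"
| "absorb_k E q (Suc k) v w =
     (if isRand v then (\<Sum>e \<in> Out E v. q e * absorb_k E q k (snd e) w)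
      else if v = w then 1 else 0)"

definition absorb_prob :: "('n, 'm, 'r) edge set \<Rightarrow> (('n, 'm, 'r) edge \<Rightarrow> real)
     \<Rightarrow> ('n, 'm, 'r) vertex \<Rightarrow> ('n, 'm, 'r) vertex \<Rightarrow> real" where
  "absorb_prob E q v w = lim (\<lambda>k. absorb_k E q k v w)"

definition pe :: "('n, 'm, 'r) edge set \<Rightarrow> (('n, 'm, 'r) edge \<Rightarrow> real)
     \<Rightarrow> ('n, 'm, 'r) edge \<Rightarrow> ('n, 'm, 'r) vertex \<Rightarrow> real" where
  "pe E q e w = absorb_prob E q (snd e) w"

definition max_part :: "('n::finite, 'm::finite, 'r) edge set \<Rightarrow> (('n, 'm, 'r) edge \<Rightarrow> real)
     \<Rightarrow> (('n, 'm, 'r) edge \<Rightarrow> real) \<Rightarrow> ('n \<Rightarrow> ereal) \<Rightarrow> 'm \<Rightarrow> ereal" where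
  "max_part E r q x w =
     Max ((\<lambda>e'. ereal (r e') +
                (\<Sum>u \<in> {u. pe E q e' (MinV u) > 0}. ereal (pe E q e' (MinV u)) * x u))
          ` Out E (MaxV w))"

definition game_op :: "('n::finite, 'm::finite, 'r) edge set \<Rightarrow> (('n, 'm, 'r) edge \<Rightarrow> real)
     \<Rightarrow> (('n, 'm, 'r) edge \<Rightarrow> real) \<Rightarrow> ('n \<Rightarrow> ereal) \<Rightarrow> 'n \<Rightarrow> ereal" where
  "game_op E r q x v =
     Min ((\<lambda>e. ereal (r e) +
               (\<Sum>w \<in> {w. pe E q e (MaxV w) > 0}. ereal (pe E q e (MaxV w)) * max_part E r q x w))
          ` Out E (MinV v))"

text \<open>Pos a = (1,a), Neg a = (-1,a), SZero = (0,-\<infinity>).\<close>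
datatype stnum = Pos real | Neg real | SZero

fun smod :: "stnum \<Rightarrow> ereal" where
  "smod (Pos a) = ereal a" | "smod (Neg a) = ereal a" | "smod SZero = -\<infinity>"

fun is_pos :: "stnum \<Rightarrow> bool" where
  "is_pos (Pos _) = True" | "is_pos _ = False"
fun is_neg :: "stnum \<Rightarrow> bool" where
  "is_neg (Neg _) = True" | "is_neg _ = False"

type_synonym smatrix = "nat \<Rightarrow> nat \<Rightarrow> stnum"

text \<open>Matrices of size d x d, indices 0..<d.\<close>
definition sym_mat :: "nat \<Rightarrow> smatrix \<Rightarrow> bool" where
  "sym_mat d Q \<longleftrightarrow> (\<forall>i<d. \<forall>j<d. Q i j = Q j i)"

definition trop_metzler :: "nat \<Rightarrow> smatrix \<Rightarrow> bool" where
  "trop_metzler d Q \<longleftrightarrow> (\<forall>i<d. \<forall>j<d. i \<noteq> j \<longrightarrow> is_neg (Q i j) \<or> Q i j = SZero)"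

definition Qplus :: "smatrix \<Rightarrow> ('k \<Rightarrow> smatrix) \<Rightarrow> ('k \<Rightarrow> ereal) \<Rightarrow> nat \<Rightarrow> ereal" where
  "Qplus Q0 Qs x i = Sup ({smod (Q0 i i) + 0 | _::unit. is_pos (Q0 i i)}
                          \<union> {smod (Qs k i i) + x k | k. is_pos (Qs k i i)})"

definition Qminus :: "smatrix \<Rightarrow> ('k \<Rightarrow> smatrix) \<Rightarrow> ('k \<Rightarrow> ereal) \<Rightarrow> nat \<Rightarrow> ereal" where
  "Qminus Q0 Qs x i = Sup ({smod (Q0 i i) + 0 | _::unit. is_neg (Q0 i i)}
                           \<union> {smod (Qs k i i) + x k | k. is_neg (Qs k i i)})"

definition Qoff :: "smatrix \<Rightarrow> ('k \<Rightarrow> smatrix) \<Rightarrow> ('k \<Rightarrow> ereal) \<Rightarrow> nat \<Rightarrow> nat \<Rightarrow> ereal" where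
  "Qoff Q0 Qs x i j = Sup ({smod (Q0 i j) + 0} \<union> range (\<lambda>k. smod (Qs k i j) + x k))"

text \<open>S(Q0 | Q1..QN), with the Q^(k), k \<ge> 1, indexed by the finite type 'k.\<close>
definition trop_spectrahedron :: "nat \<Rightarrow> smatrix \<Rightarrow> ('k::finite \<Rightarrow> smatrix) \<Rightarrow> ('k \<Rightarrow> ereal) set" where
  "trop_spectrahedron d Q0 Qs =
     {x. (\<forall>k. x k \<noteq> \<infinity>) \<and>
         (\<forall>i<d. Qplus Q0 Qs x i \<ge> Qminus Q0 Qs x i) \<and>
         (\<forall>i<d. \<forall>j<d. i \<noteq> j \<longrightarrow> Qplus Q0 Qs x i + Qplus Q0 Qs x j \<ge> 2 * Qoff Q0 Qs x i j)}"

end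

theory Submission imports Defs begin

locale GG =
  fixes R :: "'r set" and E :: "('n::finite, 'm::finite, 'r) edge set" and r q :: "('n, 'm, 'r) edge \<Rightarrow> real"
  assumes gg: "game_graph R E q"
    and c2: "\<forall>k \<in> R. card (Out E (RandV k)) = 2"
    and hr: "\<forall>k \<in> R. \<forall>e \<in> Out E (RandV k). q e = 1/2 \<and> isMax (snd e)"
begin

abbreviation VV :: "('n,'m,'r) vertex set" where "VV \<equiv> verts R"

lemma finite_verts: "finite (VV)"
proof -
  have "finite (range (MinV :: 'n \<Rightarrow> ('n,'m,'r) vertex))" "finite (range (MaxV :: 'm \<Rightarrow> ('n,'m,'r) vertex))"
    by auto
  moreover have "finite R" using gg unfolding game_graph_def by simp
  ultimately show ?thesis unfolding verts_def by simp
qed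

lemma finite_E: "finite E"
  using gg finite_verts unfolding game_graph_def by (meson finite_SigmaI rev_finite_subset)

lemma finite_Out: "finite (Out E v)"
  using finite_E unfolding Out_def by auto

lemma E_verts: "(a,b) \<in> E \<Longrightarrow> a \<in> VV \<and> b \<in> VV"
  using gg unfolding game_graph_def by auto

lemma Out_ne: "v \<in> VV \<Longrightarrow> Out E v \<noteq> {}"
  using gg unfolding game_graph_def by auto

lemma MinV_verts: "MinV v \<in> VV" and MaxV_verts: "MaxV w \<in> VV"
  unfolding verts_def by auto

lemma RandV_verts: "RandV k \<in> VV \<longleftrightarrow> k \<in> R"
  unfolding verts_def by auto

lemma pathA: "is_path E xs \<Longrightarrow> isMin (hd xs) \<Longrightarrow> isMin (last xs) \<Longrightarrow> \<exists>v \<in> set xs. isMax v"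
  using gg unfolding game_graph_def by blast
lemma pathB: "is_path E xs \<Longrightarrow> isMax (hd xs) \<Longrightarrow> isMax (last xs) \<Longrightarrow> \<exists>v \<in> set xs. isMin v"
  using gg unfolding game_graph_def by blast

lemma path2: "(a,b) \<in> E \<Longrightarrow> is_path E [a,b]"
  unfolding is_path_def by (auto simp: less_Suc_eq)
lemma path3: "(a,b) \<in> E \<Longrightarrow> (b,c) \<in> E \<Longrightarrow> is_path E [a,b,c]"
  unfolding is_path_def by (auto simp: less_Suc_eq nth_Cons split: nat.splits)

lemma rand_edge: "(RandV k, h) \<in> E \<Longrightarrow> k \<in> R \<and> q (RandV k, h) = 1/2 \<and> (\<exists>w. h = MaxV w)"
proof -
  assume a: "(RandV k, h) \<in> E"
  then have k: "k \<in> R" using E_verts RandV_verts by blast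
  have "(RandV k, h) \<in> Out E (RandV k)" using a unfolding Out_def by auto
  with hr k have "q (RandV k, h) = 1/2 \<and> isMax h" by fastforce
  then show ?thesis using k by (cases h) auto
qed

lemma min_edge: "(MinV v, h) \<in> E \<Longrightarrow> (\<exists>w. h = MaxV w) \<or> (\<exists>k. h = RandV k)"
proof (cases h)
  case (MinV u)
  assume "(MinV v, h) \<in> E"
  then have "is_path E [MinV v, MinV u]" using path2 MinV by simp
  from pathA[OF this] show ?thesis by auto
qed auto

lemma max_edge: "(MaxV w, h) \<in> E \<Longrightarrow> \<exists>u. h = MinV u"
proof (cases h)
  case (MaxV u)
  assume "(MaxV w, h) \<in> E"
  then have "is_path E [MaxV w, MaxV u]" using path2 MaxV by simp
  from pathB[OF this] show ?thesis by auto
next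
  case (RandV k)
  assume a: "(MaxV w, h) \<in> E"
  then have "RandV k \<in> VV" using E_verts[OF a] RandV by blast
  then obtain e where e: "e \<in> Out E (RandV k)" using Out_ne by blast
  then have e2: "(RandV k, snd e) \<in> E" unfolding Out_def by (cases e) auto
  then obtain w' where "snd e = MaxV w'" using rand_edge by blast
  then have "is_path E [MaxV w, RandV k, MaxV w']" using path3 a e2 RandV by simp
  from pathB[OF this] show ?thesis by auto
qed auto

lemma rand_out: "k \<in> R \<Longrightarrow> \<exists>w1 w2. w1 \<noteq> w2 \<and> Out E (RandV k) = {(RandV k, MaxV w1), (RandV k, MaxV w2)}"
proof -
  assume k: "k \<in> R"
  then obtain e1 e2 where S: "Out E (RandV k) = {e1, e2}" "e1 \<noteq> e2" using c2 card_2_iff by metis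
  have "e1 \<in> E" "fst e1 = RandV k" "e2 \<in> E" "fst e2 = RandV k" using S unfolding Out_def by auto
  then obtain w1 w2 where "e1 = (RandV k, MaxV w1)" "e2 = (RandV k, MaxV w2)"
    using rand_edge by (metis prod.collapse)
  then show ?thesis using S by auto
qed

lemma absorb_k_nonrand: "\<not> isRand v \<Longrightarrow> absorb_k E q k v w = (if v = w then 1 else 0)"
  by (cases k) auto

lemma absorb_nonrand: "\<not> isRand v \<Longrightarrow> absorb_prob E q v w = (if v = w then 1 else 0)"
  unfolding absorb_prob_def by (simp add: absorb_k_nonrand limI)


lemma absorb_rand:
  assumes k: "k \<in> R" and w: "w1 \<noteq> w2" and O: "Out E (RandV k) = {(RandV k, MaxV w1), (RandV k, MaxV w2)}"
  shows "absorb_prob E q (RandV k) t = (if t = MaxV w1 then 1/2 else 0) + (if t = MaxV w2 then 1/2 else 0)"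
proof -
  have "(RandV k, MaxV w1) \<in> Out E (RandV k)" "(RandV k, MaxV w2) \<in> Out E (RandV k)" unfolding O by simp_all
  then have e1: "(RandV k, MaxV w1) \<in> E" and e2: "(RandV k, MaxV w2) \<in> E" unfolding Out_def by simp_all
  have q1: "q (RandV k, MaxV w1) = 1/2" using rand_edge[OF e1] by simp
  have q2: "q (RandV k, MaxV w2) = 1/2" using rand_edge[OF e2] by simp
  have n: "(RandV k, MaxV w1) \<notin> {(RandV k, MaxV w2)}" using w by simp
  have A: "absorb_k E q (Suc j) (RandV k) t = (if t = MaxV w1 then 1/2 else 0) + (if t = MaxV w2 then 1/2 else 0)" for j
  proof -
    have "absorb_k E q (Suc j) (RandV k) t = (\<Sum>e\<in>Out E (RandV k). q e * absorb_k E q j (snd e) t)"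
      by (simp only: absorb_k.simps isRand.simps if_True)
    also have "\<dots> = q (RandV k, MaxV w1) * absorb_k E q j (MaxV w1) t + q (RandV k, MaxV w2) * absorb_k E q j (MaxV w2) t"
      unfolding O by (subst sum.insert[OF _ n]) simp_all
    also have "\<dots> = (if t = MaxV w1 then 1/2 else 0) + (if t = MaxV w2 then 1/2 else 0)"
      unfolding q1 q2 by (simp add: absorb_k_nonrand)
    finally show ?thesis .
  qed
  have "(\<lambda>j. absorb_k E q (Suc j) (RandV k) t) \<longlonglongrightarrow> (if t = MaxV w1 then 1/2 else 0) + (if t = MaxV w2 then 1/2 else 0)"
    unfolding A by (rule tendsto_const)
  then show ?thesis unfolding absorb_prob_def by (rule limI[OF LIMSEQ_imp_Suc])
qed

lemma Out_Max: "Out E (MaxV w) = (\<lambda>u. (MaxV w, MinV u)) ` {u. (MaxV w, MinV u) \<in> E}"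
proof -
  have "e \<in> (\<lambda>u. (MaxV w, MinV u)) ` {u. (MaxV w, MinV u) \<in> E}" if "e \<in> Out E (MaxV w)" for e
  proof -
    obtain a b where e: "e = (a,b)" by force
    then have "a = MaxV w" "(a,b) \<in> E" using that unfolding Out_def by auto
    then obtain u where "b = MinV u" using max_edge by blast
    then show ?thesis using e \<open>a = MaxV w\<close> \<open>(a,b) \<in> E\<close> by auto
  qed
  then show ?thesis unfolding Out_def by auto
qed

lemma U_ne: "{u. (MaxV w, MinV u) \<in> E} \<noteq> {}"
  using Out_ne[OF MaxV_verts] Out_Max by auto

lemma max_part_eq: "max_part E r q x w = Max ((\<lambda>u. ereal (r (MaxV w, MinV u)) + x u) ` {u. (MaxV w, MinV u) \<in> E})"
proof -
  have "(\<Sum>u' \<in> {u'. pe E q (MaxV w, MinV u) (MinV u') > 0}. ereal (pe E q (MaxV w, MinV u) (MinV u')) * x u') = x u" for u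
  proof -
    have P: "pe E q (MaxV w, MinV u) (MinV u') = (if u = u' then 1 else 0)" for u'
      by (simp add: pe_def absorb_nonrand)
    have "{u'. pe E q (MaxV w, MinV u) (MinV u') > 0} = {u}" unfolding P by auto
    then show ?thesis by (simp add: P)
  qed
  then show ?thesis unfolding max_part_def Out_Max image_image by simp
qed

lemma max_part_Sup: "Sup {ereal (r (MaxV w, MinV k)) + x k | k. (MaxV w, MinV k) \<in> E} = max_part E r q x w"
proof -
  have eq: "{ereal (r (MaxV w, MinV k)) + x k | k. (MaxV w, MinV k) \<in> E} = (\<lambda>u. ereal (r (MaxV w, MinV u)) + x u) ` {u. (MaxV w, MinV u) \<in> E}"
    by auto
  show ?thesis unfolding eq max_part_eq using U_ne by (intro cSup_eq_Max) auto
qed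

lemma half_ereal: "(y::ereal) = ereal (1/2) * y + ereal (1/2) * y"
  by (cases y) auto

lemma min_term: "(MinV v, h) \<in> E \<Longrightarrow> \<exists>a b. \<forall>x. (\<Sum>w\<in>{w. pe E q (MinV v,h) (MaxV w) > 0}. ereal (pe E q (MinV v,h) (MaxV w)) * max_part E r q x w) = ereal(1/2) * max_part E r q x a + ereal(1/2) * max_part E r q x b"
proof -
  assume a: "(MinV v, h) \<in> E"
  from min_edge[OF a] show ?thesis
  proof
    assume "\<exists>w. h = MaxV w"
    then obtain w0 where h: "h = MaxV w0" by blast
    have P: "pe E q (MinV v,h) (MaxV w) = (if w = w0 then 1 else 0)" for w
      by (simp add: pe_def absorb_nonrand h)
    have S: "{w. pe E q (MinV v,h) (MaxV w) > 0} = {w0}" unfolding P by auto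
    show ?thesis
      by (rule exI[of _ w0], rule exI[of _ w0]) (unfold S, simp add: P flip: half_ereal)
  next
    assume "\<exists>k. h = RandV k"
    then obtain k where h: "h = RandV k" by blast
    have k: "k \<in> R" using E_verts[OF a] h RandV_verts by blast
    obtain w1 w2 where w: "w1 \<noteq> w2" and O: "Out E (RandV k) = {(RandV k, MaxV w1), (RandV k, MaxV w2)}"
      using rand_out[OF k] by blast
    have P: "pe E q (MinV v,h) (MaxV w) = (if w = w1 then 1/2 else 0) + (if w = w2 then 1/2 else 0)" for w
      by (simp add: pe_def absorb_rand[OF k w O] h)
    have S: "{w. pe E q (MinV v,h) (MaxV w) > 0} = {w1, w2}"
      unfolding P using w by auto
    show ?thesis
    proof (rule exI[of _ w1], rule exI[of _ w2], rule allI)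
      fix x
      have p1: "pe E q (MinV v,h) (MaxV w1) = 1/2" and p2: "pe E q (MinV v,h) (MaxV w2) = 1/2"
        unfolding P using w by auto
      show "(\<Sum>w\<in>{w. pe E q (MinV v,h) (MaxV w) > 0}. ereal (pe E q (MinV v,h) (MaxV w)) * max_part E r q x w) = ereal(1/2) * max_part E r q x w1 + ereal(1/2) * max_part E r q x w2"
      proof -
        let ?F = "\<lambda>w. ereal (pe E q (MinV v,h) (MaxV w)) * max_part E r q x w"
        have n: "w1 \<notin> {w2}" using w by simp
        have "sum ?F {w. pe E q (MinV v,h) (MaxV w) > 0} = sum ?F (insert w1 {w2})" by (simp only: S)
        also have "\<dots> = ?F w1 + sum ?F {w2}" by (rule sum.insert[OF finite.insertI[OF finite.emptyI] n])
        also have "\<dots> = ?F w1 + ?F w2" by simp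
        finally show ?thesis by (simp only: p1 p2)
      qed
    qed
  qed
qed

lemma game_op_ge: "x v \<le> game_op E r q x v \<longleftrightarrow> (\<forall>e\<in>Out E (MinV v). x v \<le> ereal (r e) +
               (\<Sum>w \<in> {w. pe E q e (MaxV w) > 0}. ereal (pe E q e (MaxV w)) * max_part E r q x w))"
  unfolding game_op_def using finite_Out Out_ne[OF MinV_verts] by simp

lemma max_part_fin: "\<forall>k. x k \<noteq> \<infinity> \<Longrightarrow> max_part E r q x w \<noteq> \<infinity>"
proof -
  assume x: "\<forall>k. x k \<noteq> \<infinity>"
  have "max_part E r q x w \<in> (\<lambda>u. ereal (r (MaxV w, MinV u)) + x u) ` {u. (MaxV w, MinV u) \<in> E}"
    unfolding max_part_eq using U_ne by (intro Max_in) auto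
  then show ?thesis using x by auto
qed

end

definition mkQ :: "nat \<Rightarrow> (nat \<Rightarrow> 'm) \<Rightarrow> (nat \<Rightarrow> 'm) \<Rightarrow> (nat \<Rightarrow> 'n) \<Rightarrow> (nat \<Rightarrow> real) \<Rightarrow> ('m \<Rightarrow> 'n \<Rightarrow> bool) \<Rightarrow> ('m \<Rightarrow> 'n \<Rightarrow> real) \<Rightarrow> 'n \<Rightarrow> smatrix" where
 "mkQ N A B V c P w u i j = (if i = j then (if P (if even i then A (i div 2) else B (i div 2)) u
      then Pos (w (if even i then A (i div 2) else B (i div 2)) u) else SZero)
    else if i div 2 = j div 2 \<and> u = V (i div 2) then Neg (- c (i div 2)) else SZero)"

lemma mkQ_sym: "sym_mat d (mkQ N A B V c P w u) \<and> trop_metzler d (mkQ N A B V c P w u)"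
  unfolding sym_mat_def trop_metzler_def mkQ_def by auto

lemma ereal_ineq:
  fixes X A B :: ereal
  assumes "X \<noteq> \<infinity>" "A \<noteq> \<infinity>" "B \<noteq> \<infinity>"
  shows "X \<le> ereal c + (ereal (1/2) * A + ereal (1/2) * B) \<longleftrightarrow> 2 * (ereal (-c) + X) \<le> A + B"
  using assms by (cases X; cases A; cases B) (auto simp: field_simps)


lemma Qplus_mkQ: "Qplus (\<lambda>_ _. SZero) (mkQ N A B V c P w) x i =
   Sup {ereal (w (if even i then A (i div 2) else B (i div 2)) k) + x k | k. P (if even i then A (i div 2) else B (i div 2)) k}"
  unfolding Qplus_def by (rule arg_cong[where f=Sup]) (auto simp: mkQ_def)

lemma Qminus_mkQ: "Qminus (\<lambda>_ _. SZero) (mkQ N A B V c P w) x i = -\<infinity>"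
  unfolding Qminus_def by (simp add: mkQ_def bot_ereal_def)

lemma Qoff_mkQ:
  assumes x: "\<forall>k. x k \<noteq> \<infinity>" and ij: "i \<noteq> j"
  shows "Qoff (\<lambda>_ _. SZero) (mkQ N A B V c P w) x i j =
     (if i div 2 = j div 2 then ereal (- c (i div 2)) + x (V (i div 2)) else -\<infinity>)"
proof -
  have f: "smod (mkQ N A B V c P w k i j) + x k = (if i div 2 = j div 2 \<and> k = V (i div 2) then ereal (- c (i div 2)) + x k else -\<infinity>)" for k
    using x ij by (cases "x k") (auto simp: mkQ_def)
  show ?thesis unfolding Qoff_def f
    by (rule antisym) (auto intro!: Sup_least Sup_upper2[where u="ereal (- c (i div 2)) + x (V (i div 2))"])
qed


definition SupM :: "('m \<Rightarrow> 'n \<Rightarrow> bool) \<Rightarrow> ('m \<Rightarrow> 'n \<Rightarrow> real) \<Rightarrow> ('n \<Rightarrow> ereal) \<Rightarrow> 'm \<Rightarrow> ereal" where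
  "SupM P w x a = Sup {ereal (w a k) + x k | k. P a k}"

lemma spec_mkQ:
  fixes x :: "'n::finite \<Rightarrow> ereal"
  assumes x: "\<forall>k. x k \<noteq> \<infinity>"
  shows "x \<in> trop_spectrahedron (2*N) (\<lambda>_ _. SZero) (mkQ N A B V c P w) \<longleftrightarrow>
    (\<forall>t<N. 2 * (ereal (-c t) + x (V t)) \<le> SupM P w x (A t) + SupM P w x (B t))"
proof -
  have QP: "Qplus (\<lambda>_ _. SZero) (mkQ N A B V c P w) x i = SupM P w x (if even i then A (i div 2) else B (i div 2))" for i
    unfolding Qplus_mkQ SupM_def by simp
  have "x \<in> trop_spectrahedron (2*N) (\<lambda>_ _. SZero) (mkQ N A B V c P w) \<longleftrightarrow>
     (\<forall>i<2*N. \<forall>j<2*N. i \<noteq> j \<longrightarrow> 2 * Qoff (\<lambda>_ _. SZero) (mkQ N A B V c P w) x i j \<le>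
        SupM P w x (if even i then A (i div 2) else B (i div 2)) + SupM P w x (if even j then A (j div 2) else B (j div 2)))"
    unfolding trop_spectrahedron_def using x by (simp add: QP Qminus_mkQ)
  also have "\<dots> \<longleftrightarrow> (\<forall>t<N. 2 * (ereal (-c t) + x (V t)) \<le> SupM P w x (A t) + SupM P w x (B t))"
  proof
    assume H: "\<forall>i<2*N. \<forall>j<2*N. i \<noteq> j \<longrightarrow> 2 * Qoff (\<lambda>_ _. SZero) (mkQ N A B V c P w) x i j \<le>
        SupM P w x (if even i then A (i div 2) else B (i div 2)) + SupM P w x (if even j then A (j div 2) else B (j div 2))"
    show "\<forall>t<N. 2 * (ereal (-c t) + x (V t)) \<le> SupM P w x (A t) + SupM P w x (B t)"
    proof (intro allI impI)
      fix t assume t: "t < N"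
      have "2*t < 2*N" "2*t+1 < 2*N" using t by auto
      have "2 * Qoff (\<lambda>_ _. SZero) (mkQ N A B V c P w) x (2*t) (2*t+1) \<le>
        SupM P w x (if even (2*t) then A ((2*t) div 2) else B ((2*t) div 2)) + SupM P w x (if even (2*t+1) then A ((2*t+1) div 2) else B ((2*t+1) div 2))"
        using H[rule_format, of "2*t" "2*t+1"] \<open>2*t < 2*N\<close> \<open>2*t+1 < 2*N\<close> by simp
      moreover have "Qoff (\<lambda>_ _. SZero) (mkQ N A B V c P w) x (2*t) (2*t+1) = ereal (-c t) + x (V t)"
        using Qoff_mkQ[OF x, of "2*t" "2*t+1"] by simp
      ultimately show "2 * (ereal (-c t) + x (V t)) \<le> SupM P w x (A t) + SupM P w x (B t)" by simp
    qed
  next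
    assume H: "\<forall>t<N. 2 * (ereal (-c t) + x (V t)) \<le> SupM P w x (A t) + SupM P w x (B t)"
    show "\<forall>i<2*N. \<forall>j<2*N. i \<noteq> j \<longrightarrow> 2 * Qoff (\<lambda>_ _. SZero) (mkQ N A B V c P w) x i j \<le>
        SupM P w x (if even i then A (i div 2) else B (i div 2)) + SupM P w x (if even j then A (j div 2) else B (j div 2))"
    proof (intro allI impI)
      fix i j assume i: "i < 2*N" and j: "j < 2*N" and ij: "i \<noteq> j"
      show "2 * Qoff (\<lambda>_ _. SZero) (mkQ N A B V c P w) x i j \<le>
        SupM P w x (if even i then A (i div 2) else B (i div 2)) + SupM P w x (if even j then A (j div 2) else B (j div 2))"
      proof (cases "i div 2 = j div 2")
        case False
        then show ?thesis using Qoff_mkQ[OF x ij, of N A B V c P w] by simp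
      next
        case True
        define t where "t = i div 2"
        have t: "t < N" using i unfolding t_def by auto
        have ev: "(even i \<and> odd j) \<or> (odd i \<and> even j)" using True ij by presburger
        have Ht: "2 * (ereal (-c t) + x (V t)) \<le> SupM P w x (A t) + SupM P w x (B t)" using H t by auto
        show ?thesis using ev Qoff_mkQ[OF x ij, of N A B V c P w] True Ht unfolding t_def by (auto simp: add.commute)
      qed
    qed
  qed
  finally show ?thesis .
qed


theorem mainTheorem13:
  fixes R :: "'r set"
    and E :: "('n::finite, 'm::finite, 'r) edge set"
    and r q :: "('n, 'm, 'r) edge \<Rightarrow> real"
  assumes "game_graph R E q"
    and "\<forall>k \<in> R. card (Out E (RandV k)) = 2"
    and "\<forall>k \<in> R. \<forall>e \<in> Out E (RandV k). q e = 1/2 \<and> isMax (snd e)"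
  shows "\<exists>d > 0. \<exists>Qs :: 'n \<Rightarrow> smatrix.
           (\<forall>k. sym_mat d (Qs k) \<and> trop_metzler d (Qs k)) \<and>
           {x :: 'n \<Rightarrow> ereal. (\<forall>i. x i \<noteq> \<infinity>) \<and> (\<forall>i. x i \<le> game_op E r q x i)}
             = trop_spectrahedron d (\<lambda>_ _. SZero) Qs"
proof -
  interpret GG R E r q using assms by unfold_locales
  define Emin where "Emin = {e \<in> E. isMin (fst e)}"
  have "finite Emin" unfolding Emin_def using finite_E by auto
  then obtain L where L: "set L = Emin" using finite_list by blast
  define TS where "TS e x = (\<Sum>w\<in>{w. pe E q e (MaxV w) > 0}. ereal (pe E q e (MaxV w)) * max_part E r q x w)" for e x
  have "\<forall>e\<in>Emin. \<exists>p. \<forall>x. TS e x = ereal(1/2) * max_part E r q x (fst p) + ereal(1/2) * max_part E r q x (snd p)"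
  proof
    fix e assume "e \<in> Emin"
    then obtain v h where e: "e = (MinV v, h)" "(MinV v, h) \<in> E" unfolding Emin_def
      by (metis (mono_tags, lifting) isMin.elims(2) mem_Collect_eq prod.collapse)
    show "\<exists>p. \<forall>x. TS e x = ereal(1/2) * max_part E r q x (fst p) + ereal(1/2) * max_part E r q x (snd p)"
      using min_term[OF e(2)] unfolding TS_def e(1) by force
  qed
  then obtain ab where ab: "\<And>e x. e \<in> Emin \<Longrightarrow> TS e x = ereal(1/2) * max_part E r q x (fst (ab e)) + ereal(1/2) * max_part E r q x (snd (ab e))"
    by metis
  define N where "N = length L"
  define A where "A t = fst (ab (L!t))" for t
  define B where "B t = snd (ab (L!t))" for t
  define V where "V t = (case fst (L!t) of MinV v \<Rightarrow> v)" for t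
  define c where "c t = r (L!t)" for t
  define P where "P a u = ((MaxV a, MinV u) \<in> E)" for a u
  define w where "w a u = r (MaxV a, MinV u)" for a u
  obtain v0 :: 'n where True by blast
  obtain e0 where "e0 \<in> Out E (MinV v0)" using Out_ne[OF MinV_verts] by blast
  then have "e0 \<in> Emin" unfolding Emin_def Out_def by auto
  then have Npos: "N > 0" unfolding N_def using L by (cases L) auto
  have SM: "SupM P w x a = max_part E r q x a" for x a
    unfolding SupM_def P_def w_def by (rule max_part_Sup)
  have Lt: "t < N \<Longrightarrow> L!t \<in> Emin \<and> fst (L!t) = MinV (V t)" for t
  proof -
    assume "t < N"
    then have "L!t \<in> Emin" using L unfolding N_def by auto
    moreover then obtain v where "fst (L!t) = MinV v" unfolding Emin_def by (cases "fst (L!t)") auto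
    ultimately show ?thesis unfolding V_def by simp
  qed
  have key: "x v \<le> ereal (r e) + TS e x \<longleftrightarrow> 2 * (ereal (- r e) + x v) \<le> max_part E r q x (fst (ab e)) + max_part E r q x (snd (ab e))"
    if "e \<in> Emin" "\<forall>k. x k \<noteq> \<infinity>" for e x v
    using ab[OF that(1)] ereal_ineq[of "x v"] max_part_fin[OF that(2)] that(2) by simp
  show ?thesis
  proof (rule exI[of _ "2*N"], intro conjI exI[of _ "mkQ N A B V c P w"] allI)
    show "2*N > 0" using Npos by simp
    show "sym_mat (2*N) (mkQ N A B V c P w k)" for k
      by (rule conjunct1[OF mkQ_sym])
    show "trop_metzler (2*N) (mkQ N A B V c P w k)" for k
      by (rule conjunct2[OF mkQ_sym])
    show "{x :: 'n \<Rightarrow> ereal. (\<forall>i. x i \<noteq> \<infinity>) \<and> (\<forall>i. x i \<le> game_op E r q x i)}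
             = trop_spectrahedron (2*N) (\<lambda>_ _. SZero) (mkQ N A B V c P w)"
    proof (intro set_eqI iffI)
      fix x :: "'n \<Rightarrow> ereal"
      assume "x \<in> {x. (\<forall>i. x i \<noteq> \<infinity>) \<and> (\<forall>i. x i \<le> game_op E r q x i)}"
      then have x: "\<forall>i. x i \<noteq> \<infinity>" and g: "\<forall>i. x i \<le> game_op E r q x i" by auto
      show "x \<in> trop_spectrahedron (2*N) (\<lambda>_ _. SZero) (mkQ N A B V c P w)"
        unfolding spec_mkQ[OF x] SM
      proof (intro allI impI)
        fix t assume t: "t < N"
        have "L!t \<in> Out E (MinV (V t))" using Lt[OF t] unfolding Emin_def Out_def by auto
        then have "x (V t) \<le> ereal (r (L!t)) + TS (L!t) x" using g game_op_ge unfolding TS_def by blast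
        then show "2 * (ereal (- c t) + x (V t)) \<le> max_part E r q x (A t) + max_part E r q x (B t)"
          using key[OF conjunct1[OF Lt[OF t]] x] unfolding A_def B_def c_def by simp
      qed
    next
      fix x :: "'n \<Rightarrow> ereal"
      assume xs: "x \<in> trop_spectrahedron (2*N) (\<lambda>_ _. SZero) (mkQ N A B V c P w)"
      then have x: "\<forall>i. x i \<noteq> \<infinity>" unfolding trop_spectrahedron_def by auto
      have H: "\<forall>t<N. 2 * (ereal (- c t) + x (V t)) \<le> max_part E r q x (A t) + max_part E r q x (B t)"
        using xs unfolding spec_mkQ[OF x] SM .
      have "x v \<le> game_op E r q x v" for v
        unfolding game_op_ge TS_def[symmetric]
      proof
        fix e assume e: "e \<in> Out E (MinV v)"
        then have "e \<in> Emin" unfolding Emin_def Out_def by auto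
        then obtain t where t: "t < N" "L!t = e" using L unfolding N_def by (metis in_set_conv_nth)
        have "V t = v" using Lt[OF t(1)] e t(2) unfolding Out_def by auto
        then show "x v \<le> ereal (r e) + TS e x"
          using H t key[OF \<open>e \<in> Emin\<close> x] unfolding A_def B_def c_def by auto
      qed
      then show "x \<in> {x. (\<forall>i. x i \<noteq> \<infinity>) \<and> (\<forall>i. x i \<le> game_op E r q x i)}" using x by auto
    qed
  qed
qed

end
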